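(* Let $A\in\mathbb{R}^{n\times n}$, $b\in\mathbb{R}^n$, and $\mathcal{U}=[\underline{u},\overline{u}]\subset\mathbb{R}$ with $\underline{u}<\overline{u}$. Consider the system $x[i+1]=Ax[i]+bu[i]$, $x[0]=0$, with $u[i]\in\mathcal{U}$ for all $i\in\mathbb{Z}_{\ge 0}$, and let $\mathcal{R}(i,0)$ denote its reachable set at time $i$ (with $\mathcal{R}(0,0)=\{0\}$). Then for every $i\in\mathbb{N}$, $$A^{i-1}b\,\mathcal{U}=\mathcal{R}(i,0)\ominus\mathcal{R}(i-1,0).$$
   Context: The reachable set at time $i$ is $\mathcal{R}(i,0)=\{\phi_u(i;0)\mid u:\mathbb{Z}_{\ge0}\to\mathcal{U}\}$, where $\phi_u(\cdot;0)$ is the trajectory of the system with initial state $0$ under the input sequence $u$. For $B\in\mathbb{R}^{n\times m}$ and $\mathcal{X}\subset\mathbb{R}^m$, $B\mathcal{X}=\{Bx\mid x\in\mathcal{X}\}$. For $\mathcal{A},\mathcal{B}\subset\mathbb{R}^n$, the Minkowski sum is $\mathcal{A}\oplus\mathcal{B}=\{a+b\mid a\in\mathcal{A},b\in\mathcal{B}\}$ and the Minkowski difference is $\mathcal{A}\ominus\mathcal{B}=\{c\in\mathbb{R}^n\mid \{c\}\oplus\mathcal{B}\subseteq\mathcal{A}\}$. *)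

theory Defs
  imports "HOL-Analysis.Analysis"
begin

text \<open>Matrix power (the power operator on vec is componentwise, so we define it).\<close>
primrec matpow :: "real^'n^'n \<Rightarrow> nat \<Rightarrow> real^'n^'n" where
  "matpow A 0 = mat 1"
| "matpow A (Suc k) = matpow A k ** A"

primrec traj :: "real^'n^'n \<Rightarrow> real^'n \<Rightarrow> (nat \<Rightarrow> real) \<Rightarrow> real^'n \<Rightarrow> nat \<Rightarrow> real^'n" where
  "traj A b u x0 0 = x0"
| "traj A b u x0 (Suc i) = A *v traj A b u x0 i + u i *\<^sub>R b"

definition reach :: "real^'n^'n \<Rightarrow> real^'n \<Rightarrow> real set \<Rightarrow> nat \<Rightarrow> (real^'n) set" where
  "reach A b U i = {traj A b u 0 i | u. \<forall>k. u k \<in> U}"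

definition msum :: "'a::ab_group_add set \<Rightarrow> 'a set \<Rightarrow> 'a set" where
  "msum X Y = {x + y | x y. x \<in> X \<and> y \<in> Y}"

definition mdiff :: "'a::ab_group_add set \<Rightarrow> 'a set \<Rightarrow> 'a set" where
  "mdiff X Y = {c. msum {c} Y \<subseteq> X}"

end

theory Submission
  imports Defs
begin

lemma matpow_comm: "A ** matpow A k = matpow A k ** A"
  by (induction k) (simp_all add: matrix_mul_assoc matrix_mul_lid matrix_mul_rid)

lemma traj_decomp:
  "traj A b u 0 (Suc k) = u 0 *\<^sub>R (matpow A k *v b) + traj A b (\<lambda>j. u (Suc j)) 0 k"
proof (induction k)
  case 0
  then show ?case by (simp add: matrix_vector_mul_lid)
next
  case (Suc k)
  have "A *v (matpow A k *v b) = matpow A (Suc k) *v b"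
    by (simp add: matrix_vector_mul_assoc matpow_comm)
  then show ?case using Suc
    by (simp add: matrix_vector_right_distrib matrix_vector_mult_scaleR algebra_simps)
qed

lemma traj_bounded:
  fixes A :: "real^'n^'n"
  shows "\<exists>B. \<forall>u. (\<forall>j. u j \<in> {lo..hi}) \<longrightarrow> norm (traj A b u 0 k) \<le> B"
proof (induction k)
  case 0
  then show ?case by auto
next
  case (Suc k)
  then obtain B where B: "\<And>u. (\<forall>j. u j \<in> {lo..hi}) \<Longrightarrow> norm (traj A b u 0 k) \<le> B" by blast
  obtain K where K: "\<And>x. norm (A *v x) \<le> norm x * K" "K > 0"
    using bounded_linear.pos_bounded[OF matrix_vector_mul_bounded_linear[of A]] by blast
  let ?M = "max \<bar>lo\<bar> \<bar>hi\<bar>"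
  show ?case
  proof (intro exI allI impI)
    fix u :: "nat \<Rightarrow> real" assume u: "\<forall>j. u j \<in> {lo..hi}"
    have "norm (traj A b u 0 (Suc k)) \<le> norm (A *v traj A b u 0 k) + norm (u k *\<^sub>R b)"
      by (simp only: traj.simps norm_triangle_ineq)
    also have "norm (A *v traj A b u 0 k) \<le> B * K"
      using K(1)[of "traj A b u 0 k"] B[OF u] K(2)
      by (meson mult_right_mono less_imp_le order_trans)
    also have "norm (u k *\<^sub>R b) \<le> ?M * norm b"
      using u[rule_format, of k] by (auto intro!: mult_right_mono)
    finally show "norm (traj A b u 0 (Suc k)) \<le> B * K + ?M * norm b" by simp
  qed
qed

lemma iter:
  fixes c w :: "'a::real_vector"
  assumes H: "\<forall>q\<in>Q. \<exists>v\<in>{lo..hi}. \<exists>q'\<in>Q. c + q = v *\<^sub>R w + q'"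
    and q: "q \<in> Q"
  shows "\<exists>t. real m * lo \<le> t \<and> t \<le> real m * hi \<and> (\<exists>q'\<in>Q. real m *\<^sub>R c + q = t *\<^sub>R w + q')"
proof (induction m)
  case 0
  then show ?case using q by auto
next
  case (Suc m)
  then obtain t q' where t: "real m * lo \<le> t" "t \<le> real m * hi" "q' \<in> Q"
    "real m *\<^sub>R c + q = t *\<^sub>R w + q'" by blast
  obtain v q'' where v: "v \<in> {lo..hi}" "q'' \<in> Q" "c + q' = v *\<^sub>R w + q''"
    using H t(3) by blast
  have "real (Suc m) *\<^sub>R c + q = (t + v) *\<^sub>R w + q''"
    using t(4) v(3) by (simp add: algebra_simps)
  then show ?case using t v by (intro exI[of _ "t+v"]) (auto simp: algebra_simps)
qed

theorem theorem1:
  fixes A :: "real^'n^'n" and b :: "real^'n" and ulo uhi :: real and i :: nat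
  assumes "ulo < uhi" and "i \<ge> 1"
  shows "(\<lambda>v. v *\<^sub>R (matpow A (i - 1) *v b)) ` {ulo..uhi}
         = mdiff (reach A b {ulo..uhi} i) (reach A b {ulo..uhi} (i - 1))"
proof -
  obtain k where i: "i = Suc k" using assms(2) by (cases i) auto
  define w where "w = matpow A k *v b"
  define Q where "Q = reach A b {ulo..uhi} k"
  define P where "P = (\<lambda>v. v *\<^sub>R w) ` {ulo..uhi}"
  have R1: "reach A b {ulo..uhi} (Suc k) \<subseteq> msum P Q"
  proof
    fix x assume "x \<in> reach A b {ulo..uhi} (Suc k)"
    then obtain u where u: "\<forall>j. u j \<in> {ulo..uhi}" "x = traj A b u 0 (Suc k)"
      unfolding reach_def by blast
    have "x = u 0 *\<^sub>R w + traj A b (\<lambda>j. u (Suc j)) 0 k"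
      using u traj_decomp[of A b u k] by (simp add: w_def)
    moreover have "u 0 *\<^sub>R w \<in> P" using u(1) unfolding P_def by auto
    moreover have "traj A b (\<lambda>j. u (Suc j)) 0 k \<in> Q" using u(1) unfolding Q_def reach_def by auto
    ultimately show "x \<in> msum P Q" unfolding msum_def by blast
  qed
  have R2: "msum P Q \<subseteq> reach A b {ulo..uhi} (Suc k)"
  proof
    fix x assume "x \<in> msum P Q"
    then obtain v u where vu: "v \<in> {ulo..uhi}" "\<forall>j. u j \<in> {ulo..uhi}"
      "x = v *\<^sub>R w + traj A b u 0 k"
      unfolding msum_def P_def Q_def reach_def by blast
    have "x = traj A b (case_nat v u) 0 (Suc k)"
      using vu(3) traj_decomp[of A b "case_nat v u" k] by (simp add: w_def)
    moreover have "\<forall>j. case_nat v u j \<in> {ulo..uhi}" using vu by (auto split: nat.split)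
    ultimately show "x \<in> reach A b {ulo..uhi} (Suc k)" unfolding reach_def by blast
  qed
  have "P = mdiff (msum P Q) Q"
  proof
    show "P \<subseteq> mdiff (msum P Q) Q"
      unfolding mdiff_def msum_def by auto
  next
    show "mdiff (msum P Q) Q \<subseteq> P"
    proof
      fix c assume c: "c \<in> mdiff (msum P Q) Q"
      have H: "\<forall>q\<in>Q. \<exists>v\<in>{ulo..uhi}. \<exists>q'\<in>Q. c + q = v *\<^sub>R w + q'"
      proof
        fix q assume "q \<in> Q"
        then have "c + q \<in> msum P Q" using c unfolding mdiff_def msum_def by blast
        then show "\<exists>v\<in>{ulo..uhi}. \<exists>q'\<in>Q. c + q = v *\<^sub>R w + q'"
          unfolding msum_def P_def by auto
      qed
      obtain B where B: "\<And>u. (\<forall>j. u j \<in> {ulo..uhi}) \<Longrightarrow> norm (traj A b u 0 k) \<le> B"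
        using traj_bounded[of ulo uhi A b k] by blast
      have QB: "\<And>q. q \<in> Q \<Longrightarrow> norm q \<le> B" unfolding Q_def reach_def using B by blast
      define q0 where "q0 = traj A b (\<lambda>_. ulo) 0 k"
      have q0: "q0 \<in> Q" unfolding Q_def reach_def q0_def using assms(1) by auto
      have Bnn: "B \<ge> 0" using QB[OF q0] norm_ge_zero[of q0] by linarith
      have "compact P" unfolding P_def
        by (intro compact_continuous_image continuous_intros) auto
      then have cl: "closed P" by (rule compact_imp_closed)
      have "c \<in> closure P"
      proof (rule iffD2[OF closure_approachable], intro allI impI)
        fix e :: real assume e: "e > 0"
        obtain m :: nat where m: "2 * B / e < real m" using reals_Archimedean2 by blast
        have mpos: "real m > 0" using m Bnn e
          by (smt (verit) divide_nonneg_pos)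
        have "2 * B < real m * e" using m e by (simp add: field_simps)
        then have lt: "2 * B / real m < e" using mpos by (simp add: field_simps)
        obtain t q' where t: "real m * ulo \<le> t" "t \<le> real m * uhi" "q' \<in> Q"
          "real m *\<^sub>R c + q0 = t *\<^sub>R w + q'"
          using iter[OF H q0, of m] by blast
        have eq: "c - (t / real m) *\<^sub>R w = (1 / real m) *\<^sub>R (q' - q0)"
        proof -
          have "real m *\<^sub>R (c - (t / real m) *\<^sub>R w) = q' - q0"
            using t(4) mpos by (simp add: algebra_simps)
          then have "(1/real m) *\<^sub>R (real m *\<^sub>R (c - (t / real m) *\<^sub>R w)) = (1 / real m) *\<^sub>R (q' - q0)"
            by simp
          then show ?thesis using mpos by simp
        qed
        have "norm (q' - q0) \<le> 2 * B"
          using QB[OF t(3)] QB[OF q0] norm_triangle_ineq4[of q' q0] by linarith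
        then have "norm (c - (t / real m) *\<^sub>R w) \<le> 2 * B / real m"
          unfolding eq using mpos by (simp add: divide_right_mono)
        moreover have "t / real m \<in> {ulo..uhi}" using t mpos by (simp add: field_simps)
        ultimately show "\<exists>y\<in>P. dist y c < e" unfolding P_def using lt
          by (intro bexI[of _ "(t / real m) *\<^sub>R w"]) (auto simp: dist_norm norm_minus_commute)
      qed
      then show "c \<in> P" using cl by (simp add: closure_closed)
    qed
  qed
  also have "msum P Q = reach A b {ulo..uhi} (Suc k)" using R1 R2 by blast
  finally show ?thesis unfolding P_def w_def Q_def i by simp
qed

end
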